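(* Let $(\mathbf X,\mathbf Y)=\{(X^n,Y^n)\}_{n\ge1}$ be a general correlated source. For any $\varepsilon\in[0,1)$, \[(1-\varepsilon)\underline H(\mathbf X|\mathbf Y)\le R^\varepsilon_{com}(\mathbf X|\mathbf Y)\le(1-\varepsilon)\overline H(\mathbf X|\mathbf Y).\]
   Context: A general correlated source $(\mathbf X,\mathbf Y)=\{(X^n,Y^n)\}_{n\ge1}$ is an arbitrary sequence of pairs of random variables, $(X^n,Y^n)$ taking values in $\mathcal X^n\times\mathcal Y^n$ with $\mathcal X,\mathcal Y$ finite or countably infinite, with joint distribution $P_{X^nY^n}$ (no structural assumptions). Logarithms are base 2. For real random variables $Z_n$: $\mathrm{p\text{-}limsup}_n Z_n=\inf\{\alpha:\lim_n\Pr\{Z_n>\alpha\}=0\}$ and $\mathrm{p\text{-}liminf}_n Z_n=\sup\{\beta:\lim_n\Pr\{Z_n<\beta\}=0\}$. Define $\overline H(\mathbf X|\mathbf Y)=\mathrm{p\text{-}limsup}_n\frac1n\log\frac1{P_{X^n|Y^n}(X^n|Y^n)}$ and $\underline H(\mathbf X|\mathbf Y)=\mathrm{p\text{-}liminf}_n\frac1n\log\frac1{P_{X^n|Y^n}(X^n|Y^n)}$. Coding with common side-information: a code of blocklength $n$ is $(\varphi_n,\psi_n)$ with encoder $\varphi_n:\mathcal X^n\times\mathcal Y^n\to\{0,1\}^*$ such that for each $y^n$ the set $\{\varphi_n(x^n|y^n):x^n\}$ is prefix-free, and decoder $\psi_n:\{0,1\}^*\times\mathcal Y^n\to\mathcal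 X^n$; error probability $\Pr\{\psi_n(\varphi_n(X^n|Y^n),Y^n)\ne X^n\}$; $\ell_n(x^n|y^n)$ is the length of $\varphi_n(x^n|y^n)$. $R$ is $\varepsilon$-achievable if there are codes with $\limsup_n$ error probability $\le\varepsilon$ and $\limsup_n\frac1n\mathbb E[\ell_n(X^n|Y^n)]\le R$; $R^\varepsilon_{com}(\mathbf X|\mathbf Y)$ is the infimum of $\varepsilon$-achievable rates. *)

theory Defs
  imports "HOL-Probability.Probability" "HOL-Library.Sublist"
begin

definition general_source :: "(nat \<Rightarrow> ('a list \<times> 'b list) pmf) \<Rightarrow> bool" where
  "general_source P \<longleftrightarrow>
     (\<forall>n. \<forall>xy \<in> set_pmf (P n). length (fst xy) = n \<and> length (snd xy) = n)"

definition cond_prob :: "('a list \<times> 'b list) pmf \<Rightarrow> 'a list \<Rightarrow> 'b list \<Rightarrow> real" where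
  "cond_prob Q x y = pmf Q (x, y) / pmf (map_pmf snd Q) y"

definition ent_density :: "(nat \<Rightarrow> ('a list \<times> 'b list) pmf) \<Rightarrow> nat \<Rightarrow> 'a list \<times> 'b list \<Rightarrow> real" where
  "ent_density P n xy = (1 / real n) * log 2 (1 / cond_prob (P n) (fst xy) (snd xy))"

text \<open>p-limsup and p-liminf (values in the extended reals; inf of the empty set is +infinity).\<close>
definition p_limsup :: "(nat \<Rightarrow> 'c pmf) \<Rightarrow> (nat \<Rightarrow> 'c \<Rightarrow> real) \<Rightarrow> ereal" where
  "p_limsup M Z = Inf (ereal ` {\<alpha>. ((\<lambda>n. measure_pmf.prob (M n) {w. Z n w > \<alpha>}) \<longlongrightarrow> 0) sequentially})"

definition p_liminf :: "(nat \<Rightarrow> 'c pmf) \<Rightarrow> (nat \<Rightarrow> 'c \<Rightarrow> real) \<Rightarrow> ereal" where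
  "p_liminf M Z = Sup (ereal ` {\<beta>. ((\<lambda>n. measure_pmf.prob (M n) {w. Z n w < \<beta>}) \<longlongrightarrow> 0) sequentially})"

definition upper_cond_entropy :: "(nat \<Rightarrow> ('a list \<times> 'b list) pmf) \<Rightarrow> ereal" where
  "upper_cond_entropy P = p_limsup P (ent_density P)"

definition lower_cond_entropy :: "(nat \<Rightarrow> ('a list \<times> 'b list) pmf) \<Rightarrow> ereal" where
  "lower_cond_entropy P = p_liminf P (ent_density P)"

definition prefix_free :: "bool list set \<Rightarrow> bool" where
  "prefix_free S \<longleftrightarrow> (\<forall>u\<in>S. \<forall>v\<in>S. \<not> strict_prefix u v)"

definition com_code :: "nat \<Rightarrow> ('a list \<Rightarrow> 'b list \<Rightarrow> bool list) \<Rightarrow> bool" where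
  "com_code n enc \<longleftrightarrow> (\<forall>y. length y = n \<longrightarrow> prefix_free {enc x y | x. length x = n})"

definition err_prob :: "('a list \<times> 'b list) pmf \<Rightarrow> ('a list \<Rightarrow> 'b list \<Rightarrow> bool list)
    \<Rightarrow> (bool list \<Rightarrow> 'b list \<Rightarrow> 'a list) \<Rightarrow> real" where
  "err_prob Q enc dec = measure_pmf.prob Q {xy. dec (enc (fst xy) (snd xy)) (snd xy) \<noteq> fst xy}"

definition exp_length :: "('a list \<times> 'b list) pmf \<Rightarrow> ('a list \<Rightarrow> 'b list \<Rightarrow> bool list) \<Rightarrow> ennreal" where
  "exp_length Q enc = (\<integral>\<^sup>+ xy. ennreal (real (length (enc (fst xy) (snd xy)))) \<partial>measure_pmf Q)"

definition com_achievable :: "(nat \<Rightarrow> ('a list \<times> 'b list) pmf) \<Rightarrow> real \<Rightarrow> real \<Rightarrow> bool" where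
  "com_achievable P \<epsilon> R \<longleftrightarrow>
    (\<exists>(enc :: nat \<Rightarrow> 'a list \<Rightarrow> 'b list \<Rightarrow> bool list) (dec :: nat \<Rightarrow> bool list \<Rightarrow> 'b list \<Rightarrow> 'a list).
       (\<forall>n. com_code n (enc n)) \<and>
       limsup (\<lambda>n. ereal (err_prob (P n) (enc n) (dec n))) \<le> ereal \<epsilon> \<and>
       limsup (\<lambda>n. enn2ereal (exp_length (P n) (enc n)) / ereal (real n)) \<le> ereal R)"

definition R_com :: "(nat \<Rightarrow> ('a list \<times> 'b list) pmf) \<Rightarrow> real \<Rightarrow> ereal" where
  "R_com P \<epsilon> = Inf (ereal ` {R. com_achievable P \<epsilon> R})"

end

theory Submission
  imports Defs "HOL-Real_Asymp.Real_Asymp"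
begin


lemma fibre_bound:
  fixes Q :: "('a \<times> 'b) pmf"
  assumes le: "\<And>y. y \<in> set_pmf (map_pmf snd Q) \<Longrightarrow>
     measure Q (B \<inter> {z. snd z = y}) \<le> c * measure Q {z. snd z = y}"
  shows "measure Q B \<le> c"
proof -
  let ?p = "map_pmf snd Q"
  have eq: "bind_pmf ?p (\<lambda>y. cond_pmf Q {z. y = snd z}) = Q"
    by (rule bind_cond_pmf_cancel) (auto simp: pmf_map vimage_def eq_commute intro: arg_cong2[where f=measure])
  have c0: "c \<ge> 0"
  proof -
    obtain y where y: "y \<in> set_pmf ?p" using set_pmf_not_empty[of ?p] by blast
    hence "measure Q {z. snd z = y} > 0" 
      by (auto intro!: measure_pmf_posI)
    moreover have "0 \<le> measure Q (B \<inter> {z. snd z = y})" by simp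
    ultimately show ?thesis using le[OF y] by (meson dual_order.trans zero_le_mult_iff not_le)
  qed
  have "emeasure Q B = emeasure (bind_pmf ?p (\<lambda>y. cond_pmf Q {z. y = snd z})) B"
    by (simp add: eq)
  also have "\<dots> = (\<integral>\<^sup>+y. emeasure (cond_pmf Q {z. y = snd z}) B \<partial>?p)"
    by simp
  also have "\<dots> \<le> (\<integral>\<^sup>+y. ennreal c \<partial>?p)"
  proof (rule nn_integral_mono_AE)
    show "AE y in ?p. emeasure (cond_pmf Q {z. y = snd z}) B \<le> ennreal c"
    proof (subst AE_measure_pmf_iff, intro ballI)
      fix y assume y: "y \<in> set_pmf ?p"
      have ne: "set_pmf Q \<inter> {z. y = snd z} \<noteq> {}" using y by auto
      obtain z where z: "z \<in> set_pmf Q" "y = snd z" using ne by blast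
      have pos: "measure Q {z. y = snd z} > 0" using z by (intro measure_pmf_posI) auto
      have "emeasure (cond_pmf Q {z. y = snd z}) B = 
             emeasure (uniform_measure (measure_pmf Q) {z. y = snd z}) B"
        by (simp add: cond_pmf.rep_eq[OF ne])
      also have "\<dots> = emeasure Q (B \<inter> {z. y = snd z}) / emeasure Q {z. y = snd z}"
        by (simp add: Int_commute)
      also have "\<dots> = ennreal (measure Q (B \<inter> {z. y = snd z}) / measure Q {z. y = snd z})"
        using pos by (simp add: measure_pmf.emeasure_eq_measure divide_ennreal)
      also have "\<dots> \<le> ennreal c"
      proof (rule ennreal_leI)
        have "measure Q (B \<inter> {z. y = snd z}) \<le> c * measure Q {z. y = snd z}"
          using le[OF y] by (simp add: eq_commute)
        thus "measure Q (B \<inter> {z. y = snd z}) / measure Q {z. y = snd z} \<le> c"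
          using pos by (simp add: divide_le_eq)
      qed
      finally show "emeasure (cond_pmf Q {z. y = snd z}) B \<le> ennreal c" .
    qed
  qed
  also have "\<dots> = ennreal c" by simp
  finally show ?thesis using c0 by (simp add: measure_pmf.emeasure_eq_measure)
qed

lemma pmf_le_snd: "pmf Q (x, y) \<le> pmf (map_pmf snd Q) y"
proof -
  have "pmf Q (x,y) = measure Q {(x,y)}" by (simp add: measure_pmf_single)
  also have "\<dots> \<le> measure Q (snd -` {y})" by (intro measure_pmf.finite_measure_mono) auto
  finally show ?thesis by (simp add: pmf_map)
qed

lemma cond_prob_nonneg: "0 \<le> cond_prob Q x y"
  by (simp add: cond_prob_def)

lemma cond_prob_le1: "cond_prob Q x y \<le> 1"
  using pmf_le_snd[of Q x y] by (auto simp: cond_prob_def divide_le_eq_1)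

lemma pmf_eq_cond: "pmf Q (x, y) = cond_prob Q x y * pmf (map_pmf snd Q) y"
proof (cases "pmf (map_pmf snd Q) y = 0")
  case True
  then show ?thesis using pmf_le_snd[of Q x y] pmf_nonneg[of Q "(x,y)"] by (simp add: cond_prob_def)
qed (simp add: cond_prob_def)

lemma cond_prob_pos: "(x, y) \<in> set_pmf Q \<Longrightarrow> 0 < cond_prob Q x y"
proof -
  assume a: "(x, y) \<in> set_pmf Q"
  hence "0 < pmf Q (x,y)" by (simp add: pmf_positive)
  moreover hence "0 < pmf (map_pmf snd Q) y" using pmf_le_snd[of Q x y] by linarith
  ultimately show ?thesis by (simp add: cond_prob_def)
qed

lemma fibre_sum_le:
  assumes "finite F"
  shows "(\<Sum>x\<in>F. pmf Q (x, y)) \<le> pmf (map_pmf snd Q) y"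
proof -
  have "(\<Sum>x\<in>F. pmf Q (x, y)) = (\<Sum>z\<in>(\<lambda>x. (x,y)) ` F. pmf Q z)"
    by (subst sum.reindex) (auto simp: inj_on_def)
  also have "\<dots> = measure Q ((\<lambda>x. (x,y)) ` F)"
    using assms by (simp add: measure_measure_pmf_finite)
  also have "\<dots> \<le> measure Q (snd -` {y})" by (intro measure_pmf.finite_measure_mono) auto
  finally show ?thesis by (simp add: pmf_map)
qed

lemma high_prob_finite:
  assumes c: "0 < c"
  shows "finite {x. c \<le> cond_prob Q x y} \<and> real (card {x. c \<le> cond_prob Q x y}) \<le> 1 / c"
proof -
  let ?A = "{x. c \<le> cond_prob Q x y}"
  let ?py = "pmf (map_pmf snd Q) y"
  have fin_le: "real (card F) \<le> 1 / c" if F: "finite F" "F \<subseteq> ?A" for F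
  proof (cases "F = {}")
    case True then show ?thesis using c by simp
  next
    case False
    then obtain x where x: "x \<in> F" by blast
    hence "c \<le> cond_prob Q x y" using F by auto
    hence py: "?py > 0" using c pmf_nonneg[of "map_pmf snd Q" y]
      by (cases "?py = 0") (auto simp: cond_prob_def)
    have "real (card F) * (c * ?py) = (\<Sum>x\<in>F. c * ?py)" by simp
    also have "\<dots> \<le> (\<Sum>x\<in>F. pmf Q (x, y))"
    proof (rule sum_mono)
      fix x assume "x \<in> F"
      hence "c \<le> cond_prob Q x y" using F by auto
      thus "c * ?py \<le> pmf Q (x, y)" using py by (simp add: pmf_eq_cond mult_right_mono)
    qed
    also have "\<dots> \<le> ?py" using fibre_sum_le[OF F(1)] .
    finally have "real (card F) * c * ?py \<le> 1 * ?py" by (simp add: mult.assoc)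
    hence "real (card F) * c \<le> 1" using py by (simp add: mult_le_cancel_right)
    thus ?thesis using c by (simp add: le_divide_eq)
  qed
  have fin: "finite ?A"
  proof (rule ccontr)
    assume "infinite ?A"
    then obtain F where F: "finite F" "card F = nat \<lceil>1/c\<rceil> + 1" "F \<subseteq> ?A"
      using infinite_arbitrarily_large by blast
    have "real (card F) > 1 / c" using F(2) by linarith
    with fin_le[OF F(1) F(3)] show False by simp
  qed
  with fin_le[OF fin] show ?thesis by simp
qed

lemma ent_density_nonneg: "0 \<le> ent_density P n z"
proof -
  have "0 \<le> log 2 (1 / cond_prob (P n) (fst z) (snd z))"
  proof (cases "cond_prob (P n) (fst z) (snd z) = 0")
    case False
    hence "0 < cond_prob (P n) (fst z) (snd z)" using cond_prob_nonneg[of "P n" "fst z" "snd z"] by linarith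
    thus ?thesis using cond_prob_le1[of "P n"] by simp
  qed (simp add: log_def)
  thus ?thesis by (simp add: ent_density_def)
qed

lemma ent_density_less_iff:
  assumes "z \<in> set_pmf (P n)" "n > 0"
  shows "ent_density P n z < b \<longleftrightarrow> 2 powr (- (real n * b)) < cond_prob (P n) (fst z) (snd z)"
proof -
  have cp: "0 < cond_prob (P n) (fst z) (snd z)" using cond_prob_pos[of "fst z" "snd z" "P n"] assms by simp
  have "ent_density P n z < b \<longleftrightarrow> log 2 (1 / cond_prob (P n) (fst z) (snd z)) < real n * b"
    using assms by (simp add: ent_density_def field_simps)
  also have "\<dots> \<longleftrightarrow> 1 / cond_prob (P n) (fst z) (snd z) < 2 powr (real n * b)"
    using cp by (simp add: log_less_iff)
  also have "\<dots> \<longleftrightarrow> 2 powr (- (real n * b)) < cond_prob (P n) (fst z) (snd z)"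
    using cp by (simp add: powr_minus field_simps)
  finally show ?thesis .
qed

lemma ent_density_greater_iff:
  assumes "z \<in> set_pmf (P n)" "n > 0"
  shows "b < ent_density P n z \<longleftrightarrow> cond_prob (P n) (fst z) (snd z) < 2 powr (- (real n * b))"
proof -
  have cp: "0 < cond_prob (P n) (fst z) (snd z)" using cond_prob_pos[of "fst z" "snd z" "P n"] assms by simp
  have "b < ent_density P n z \<longleftrightarrow> real n * b < log 2 (1 / cond_prob (P n) (fst z) (snd z))"
    using assms by (simp add: ent_density_def field_simps)
  also have "\<dots> \<longleftrightarrow> 2 powr (real n * b) < 1 / cond_prob (P n) (fst z) (snd z)"
    using cp by (simp add: less_log_iff)
  also have "\<dots> \<longleftrightarrow> cond_prob (P n) (fst z) (snd z) < 2 powr (- (real n * b))"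
    using cp by (simp add: powr_minus field_simps)
  finally show ?thesis .
qed


lemma select_subset:
  fixes Q :: "'c::countable pmf"
  assumes m: "\<And>z. z \<in> A \<Longrightarrow> pmf Q z \<le> m" and m0: "0 \<le> m"
  shows "\<exists>S\<subseteq>A. min (measure Q A) t \<le> measure Q S \<and> measure Q S \<le> max t 0 + m"
proof -
  define Sk where "Sk k = {z \<in> A. to_nat z < k}" for k
  have inc: "incseq Sk" unfolding Sk_def incseq_def by auto
  have un: "(\<Union>k. Sk k) = A" unfolding Sk_def by auto
  have step: "measure Q (Sk (Suc k)) \<le> measure Q (Sk k) + m" for k
  proof -
    have "Sk (Suc k) \<subseteq> Sk k \<union> ({from_nat k} \<inter> A)"
      unfolding Sk_def by (auto simp: less_Suc_eq)
    hence "measure Q (Sk (Suc k)) \<le> measure Q (Sk k \<union> ({from_nat k} \<inter> A))"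
      by (intro measure_pmf.finite_measure_mono) auto
    also have "\<dots> \<le> measure Q (Sk k) + measure Q ({from_nat k} \<inter> A)"
      by (rule measure_subadditive) auto
    also have "measure Q ({from_nat k} \<inter> A) \<le> m"
      using m m0 by (cases "from_nat k \<in> A") (auto simp: measure_pmf_single)
    finally show ?thesis by simp
  qed
  show ?thesis
  proof (cases "\<exists>k. t \<le> measure Q (Sk k)")
    case True
    define k where "k = (LEAST k. t \<le> measure Q (Sk k))"
    have tk: "t \<le> measure Q (Sk k)" unfolding k_def using True by (metis LeastI)
    show ?thesis
    proof (cases k)
      case 0
      hence "Sk k = {}" unfolding Sk_def by auto
      with tk have "t \<le> 0" by simp
      thus ?thesis using m0 by (intro exI[of _ "{}"]) auto
    next
      case (Suc j)
      have "\<not> t \<le> measure Q (Sk j)" using Suc unfolding k_def by (metis Suc_n_not_le_n not_less_Least k_def lessI)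
      hence "measure Q (Sk k) < t + m" using step[of j] Suc by simp
      moreover have "Sk k \<subseteq> A" unfolding Sk_def by auto
      ultimately show ?thesis using tk by (intro exI[of _ "Sk k"]) auto
    qed
  next
    case False
    have "(\<lambda>k. measure Q (Sk k)) \<longlonglongrightarrow> measure Q (\<Union>k. Sk k)"
      by (rule measure_pmf.finite_Lim_measure_incseq) (use inc in auto)
    hence "measure Q A \<le> t" using False un
      by (intro LIMSEQ_le_const2[of "\<lambda>k. measure Q (Sk k)"]) (auto simp: not_le less_imp_le)
    thus ?thesis using m0 by (intro exI[of _ A]) auto
  qed
qed


lemma sum_pow2_less: "(\<Sum>i\<le>L. (2::nat)^i) < 2^(L+1)"
  by (induction L) auto

lemma card_short_lists: "finite {xs::bool list. length xs \<le> L} \<and> card {xs::bool list. length xs \<le> L} \<le> 2^(L+1)"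
proof -
  have eq: "{xs. set xs \<subseteq> UNIV \<and> length xs \<le> L} = {xs::bool list. length xs \<le> L}" by simp
  have "card {xs::bool list. set xs \<subseteq> UNIV \<and> length xs \<le> L} = (\<Sum>i\<le>L. 2^i)"
    by (subst card_lists_length_le) (auto simp: card_UNIV_bool)
  hence c: "card {xs::bool list. length xs \<le> L} = (\<Sum>i\<le>L. 2^i)" unfolding eq .
  have "finite {xs::bool list. set xs \<subseteq> UNIV \<and> length xs \<le> L}"
    by (rule finite_lists_length_le) auto
  hence f: "finite {xs::bool list. length xs \<le> L}" unfolding eq .
  show ?thesis using sum_pow2_less[of L] c f by simp
qed

lemma converse_count:
  fixes Q :: "('a list \<times> 'b list) pmf" and enc :: "'a list \<Rightarrow> 'b list \<Rightarrow> bool list"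
    and dec :: "bool list \<Rightarrow> 'b list \<Rightarrow> 'a list"
  assumes c: "0 \<le> c"
  shows "measure Q {z. dec (enc (fst z) (snd z)) (snd z) = fst z \<and> cond_prob Q (fst z) (snd z) \<le> c
            \<and> length (enc (fst z) (snd z)) \<le> L} \<le> 2^(L+1) * c"
    (is "measure Q ?B \<le> _")
proof (rule fibre_bound)
  fix y assume y: "y \<in> set_pmf (map_pmf snd Q)"
  define X where "X = {x. (x, y) \<in> ?B}"
  let ?py = "pmf (map_pmf snd Q) y"
  have inj: "inj_on (\<lambda>x. enc x y) X"
    unfolding X_def inj_on_def by force
  have img: "(\<lambda>x. enc x y) ` X \<subseteq> {xs. length xs \<le> L}" unfolding X_def by auto
  have finW: "finite {xs::bool list. length xs \<le> L}" using card_short_lists by blast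
  have finX: "finite X" using finite_imageD[OF finite_subset[OF img finW] inj] .
  have cardX: "card X \<le> 2^(L+1)"
  proof -
    have "card X = card ((\<lambda>x. enc x y) ` X)" using card_image[OF inj] by simp
    also have "\<dots> \<le> card {xs::bool list. length xs \<le> L}" by (rule card_mono[OF finW img])
    also have "\<dots> \<le> 2^(L+1)" using card_short_lists by blast
    finally show ?thesis .
  qed
  have eq: "?B \<inter> {z. snd z = y} = (\<lambda>x. (x, y)) ` X" unfolding X_def by auto
  have "measure Q (?B \<inter> {z. snd z = y}) = (\<Sum>z\<in>(\<lambda>x. (x, y)) ` X. pmf Q z)"
    using finX by (simp add: eq measure_measure_pmf_finite)
  also have "\<dots> = (\<Sum>x\<in>X. pmf Q (x, y))" by (subst sum.reindex) (auto simp: inj_on_def)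
  also have "\<dots> \<le> (\<Sum>x\<in>X. c * ?py)"
  proof (rule sum_mono)
    fix x assume "x \<in> X"
    hence "cond_prob Q x y \<le> c" unfolding X_def by auto
    thus "pmf Q (x, y) \<le> c * ?py" by (simp add: pmf_eq_cond mult_right_mono)
  qed
  also have "\<dots> = real (card X) * c * ?py" by simp
  also have "\<dots> \<le> 2^(L+1) * c * ?py"
  proof -
    have "real (card X) \<le> real (2^(L+1))" using cardX of_nat_mono by blast
    hence "real (card X) \<le> 2^(L+1)" by simp
    thus ?thesis using c pmf_nonneg[of "map_pmf snd Q" y] by (intro mult_right_mono) auto
  qed
  also have "?py = measure Q {z. snd z = y}" by (simp add: pmf_map vimage_def)
  finally show "measure Q (?B \<inter> {z. snd z = y}) \<le> 2 ^ (L + 1) * c * measure Q {z. snd z = y}" .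
qed




lemma small_limit:
  fixes f :: "real \<Rightarrow> real"
  assumes "0 < \<eta>0" "\<And>\<eta>. 0 < \<eta> \<Longrightarrow> \<eta> < \<eta>0 \<Longrightarrow> f \<eta> \<le> R" "(f \<longlongrightarrow> l) (at_right 0)"
  shows "l \<le> R"
proof (rule tendsto_upperbound[OF assms(3)])
  show "eventually (\<lambda>\<eta>. f \<eta> \<le> R) (at_right 0)"
    unfolding eventually_at_right_field using assms(1,2) by blast
qed (simp add: trivial_limit_at_right_real)

lemma rate_ge:
  assumes "ennreal a \<le> E" "0 \<le> a" "0 < n"
  shows "ereal (a / real n) \<le> enn2ereal E / ereal (real n)"
proof -
  have "ereal a \<le> enn2ereal E" using assms(1,2) by (metis enn2ereal_ennreal less_eq_ennreal.rep_eq)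
  hence "ereal a / ereal (real n) \<le> enn2ereal E / ereal (real n)"
    using assms(3) by (intro ereal_divide_right_mono) auto
  thus ?thesis using assms(3) by simp
qed

lemma rate_le:
  assumes "E \<le> ennreal a" "0 \<le> a" "0 < n"
  shows "enn2ereal E / ereal (real n) \<le> ereal (a / real n)"
proof -
  have "enn2ereal E \<le> ereal a" using assms(1,2) by (metis enn2ereal_ennreal less_eq_ennreal.rep_eq)
  hence "enn2ereal E / ereal (real n) \<le> ereal a / ereal (real n)"
    using assms(3) by (intro ereal_divide_right_mono) auto
  thus ?thesis using assms(3) by simp
qed

lemma rate_nonneg: "0 \<le> enn2ereal E / ereal (real n)"
  by (cases "n = 0") (auto simp: enn2ereal_nonneg ereal_zero_le_0_iff)


lemma pow2_bound:
  assumes "0 < \<eta>" "\<eta> < b"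
  shows "2^(nat \<lfloor>real n * (b - \<eta>)\<rfloor> + 1) * 2 powr (- (real n * b)) \<le> 2 * 2 powr (- (real n * \<eta>))"
proof -
  let ?L = "nat \<lfloor>real n * (b - \<eta>)\<rfloor>"
  have nn: "0 \<le> real n * (b - \<eta>)" using assms by simp
  have L: "real ?L \<le> real n * (b - \<eta>)" using nn by linarith
  have "(2::real)^(?L + 1) = 2 * 2 powr (real ?L)" by (simp add: powr_realpow)
  also have "\<dots> \<le> 2 * 2 powr (real n * (b - \<eta>))" using L by simp
  finally have "(2::real)^(?L + 1) * 2 powr (- (real n * b)) \<le> 2 * 2 powr (real n * (b - \<eta>)) * 2 powr (- (real n * b))"
    by (simp add: mult_right_mono)
  also have "\<dots> = 2 * 2 powr (- (real n * \<eta>))" by (simp add: powr_add[symmetric] algebra_simps)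
  finally show ?thesis .
qed

lemma converse_main:
  fixes P :: "nat \<Rightarrow> ('a list \<times> 'b list) pmf"
  assumes ach: "com_achievable P \<epsilon> R" and e: "0 \<le> \<epsilon>" "\<epsilon> < 1"
    and b: "((\<lambda>n. measure_pmf.prob (P n) {w. ent_density P n w < b}) \<longlongrightarrow> 0) sequentially"
  shows "(1 - \<epsilon>) * b \<le> R"
proof -
  obtain enc :: "nat \<Rightarrow> 'a list \<Rightarrow> 'b list \<Rightarrow> bool list" and dec :: "nat \<Rightarrow> bool list \<Rightarrow> 'b list \<Rightarrow> 'a list"
    where code: "\<forall>n. com_code n (enc n)"
      and err: "limsup (\<lambda>n. ereal (err_prob (P n) (enc n) (dec n))) \<le> ereal \<epsilon>"
      and rate: "limsup (\<lambda>n. enn2ereal (exp_length (P n) (enc n)) / ereal (real n)) \<le> ereal R"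
    using ach unfolding com_achievable_def by blast
  let ?rate = "\<lambda>n. enn2ereal (exp_length (P n) (enc n)) / ereal (real n)"
  have R0: "0 \<le> R"
  proof -
    have "0 \<le> liminf ?rate" by (intro Liminf_bounded) (simp add: rate_nonneg)
    also have "\<dots> \<le> limsup ?rate" by (rule Liminf_le_Limsup) simp
    finally have "(0::ereal) \<le> ereal R" using rate by (rule order_trans)
    thus ?thesis by simp
  qed
  show ?thesis
  proof (cases "b \<le> 0")
    case True
    thus ?thesis using R0 e by (smt (verit) mult_nonneg_nonpos)
  next
    case False
    hence bpos: "0 < b" by simp
    define f where "f \<eta> = (b - \<eta>) * (1 - \<epsilon> - 3 * \<eta>) - \<eta>" for \<eta>
    have fle: "f \<eta> \<le> R" if \<eta>: "0 < \<eta>" "\<eta> < min b ((1 - \<epsilon>) / 3)" for \<eta>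
    proof -
      define L where "L n = nat \<lfloor>real n * (b - \<eta>)\<rfloor>" for n
      have ev1: "eventually (\<lambda>n. ereal (err_prob (P n) (enc n) (dec n)) < ereal (\<epsilon> + \<eta>)) sequentially"
        by (rule Limsup_lessD, rule le_less_trans[OF err]) (use \<eta> in simp)
      have ev2: "eventually (\<lambda>n. ?rate n < ereal (R + \<eta>)) sequentially"
        by (rule Limsup_lessD, rule le_less_trans[OF rate]) (use \<eta> in simp)
      have ev3: "eventually (\<lambda>n. measure_pmf.prob (P n) {w. ent_density P n w < b} < \<eta>) sequentially"
        by (rule order_tendstoD(2)[OF b]) (use \<eta> in auto)
      have lim4: "((\<lambda>n. 2 * 2 powr (- (real n * \<eta>))) \<longlongrightarrow> 0) sequentially"
        using \<eta> by real_asymp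
      have ev4: "eventually (\<lambda>n. 2 * 2 powr (- (real n * \<eta>)) < \<eta>) sequentially"
        by (rule order_tendstoD(2)[OF lim4]) (use \<eta> in auto)
      have ev5: "eventually (\<lambda>n. 0 < n) sequentially" by (rule eventually_gt_at_top)
      from eventually_conj[OF ev1 eventually_conj[OF ev2 eventually_conj[OF ev3 eventually_conj[OF ev4 ev5]]]]
      obtain N where N: "\<forall>n\<ge>N. ereal (err_prob (P n) (enc n) (dec n)) < ereal (\<epsilon> + \<eta>) \<and> ?rate n < ereal (R + \<eta>)
          \<and> measure_pmf.prob (P n) {w. ent_density P n w < b} < \<eta> \<and> 2 * 2 powr (- (real n * \<eta>)) < \<eta> \<and> 0 < n"
        unfolding eventually_sequentially by blast
      define n where "n = N"
      have n1: "err_prob (P n) (enc n) (dec n) < \<epsilon> + \<eta>" and n2: "?rate n < ereal (R + \<eta>)"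
        and n3: "measure_pmf.prob (P n) {w. ent_density P n w < b} < \<eta>"
        and n4: "2 * 2 powr (- (real n * \<eta>)) < \<eta>" and n5: "0 < n"
        using N unfolding n_def by auto
      let ?Q = "P n"
      let ?l = "\<lambda>z. length (enc n (fst z) (snd z))"
      define C where "C = {z. dec n (enc n (fst z) (snd z)) (snd z) = fst z}"
      define D where "D = {z. cond_prob ?Q (fst z) (snd z) \<le> 2 powr (- (real n * b))}"
      define Bs where "Bs = {z. dec n (enc n (fst z) (snd z)) (snd z) = fst z \<and> cond_prob ?Q (fst z) (snd z) \<le> 2 powr (- (real n * b))
            \<and> length (enc n (fst z) (snd z)) \<le> L n}"
      define G where "G = {z. L n < ?l z}"
      have pB: "measure ?Q Bs \<le> 2 * 2 powr (- (real n * \<eta>))"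
      proof -
        have "measure ?Q Bs \<le> 2^(L n + 1) * 2 powr (- (real n * b))"
          unfolding Bs_def by (rule converse_count) simp
        also have "\<dots> \<le> 2 * 2 powr (- (real n * \<eta>))" unfolding L_def using \<eta> by (intro pow2_bound) auto
        finally show ?thesis .
      qed
      have pC: "measure ?Q (- C) = err_prob (P n) (enc n) (dec n)"
        unfolding C_def err_prob_def by (simp add: Compl_eq set_diff_eq)
      have pD: "measure ?Q (- D) \<le> measure_pmf.prob (P n) {w. ent_density P n w < b}"
      proof -
        have "measure ?Q (- D) = measure ?Q (- D \<inter> set_pmf ?Q)" by (simp add: measure_Int_set_pmf)
        also have "\<dots> \<le> measure_pmf.prob (P n) {w. ent_density P n w < b}"
          by (intro measure_pmf.finite_measure_mono) (auto simp: D_def ent_density_less_iff[OF _ n5])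
        finally show ?thesis .
      qed
      have "measure ?Q (C \<inter> D) \<le> measure ?Q (G \<union> Bs)"
        by (intro measure_pmf.finite_measure_mono) (auto simp: C_def D_def G_def Bs_def)
      also have "\<dots> \<le> measure ?Q G + measure ?Q Bs" by (rule measure_subadditive) auto
      finally have cd: "measure ?Q (C \<inter> D) \<le> measure ?Q G + measure ?Q Bs" .
      have "measure ?Q (- (C \<inter> D)) \<le> measure ?Q (- C) + measure ?Q (- D)"
        by (subst Compl_Int, rule measure_subadditive) auto
      hence "1 - measure ?Q (C \<inter> D) \<le> measure ?Q (- C) + measure ?Q (- D)"
        by (simp add: measure_pmf.prob_compl[symmetric] Compl_eq_Diff_UNIV)
      hence pG: "1 - \<epsilon> - 3 * \<eta> \<le> measure ?Q G" using cd pB pC pD n1 n3 n4 by linarith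
      have Gpos: "0 \<le> 1 - \<epsilon> - 3 * \<eta>" using \<eta> by (simp add: field_simps min_def split: if_splits)
      have expl: "ennreal (real n * (b - \<eta>) * measure ?Q G) \<le> exp_length ?Q (enc n)"
      proof -
        have "ennreal (real n * (b - \<eta>) * measure ?Q G) = (\<integral>\<^sup>+z. ennreal (real n * (b - \<eta>)) * indicator G z \<partial>?Q)"
        proof -
          have "(\<integral>\<^sup>+z. ennreal (real n * (b - \<eta>)) * indicator G z \<partial>?Q) = ennreal (real n * (b - \<eta>)) * emeasure ?Q G"
            by (rule nn_integral_cmult_indicator) simp
          also have "\<dots> = ennreal (real n * (b - \<eta>)) * ennreal (measure ?Q G)"
            by (simp add: measure_pmf.emeasure_eq_measure)
          also have "\<dots> = ennreal (real n * (b - \<eta>) * measure ?Q G)"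
            using \<eta> by (simp add: ennreal_mult)
          finally show ?thesis by simp
        qed
        also have "\<dots> \<le> (\<integral>\<^sup>+z. ennreal (real (?l z)) \<partial>?Q)"
        proof (rule nn_integral_mono)
          fix z
          show "ennreal (real n * (b - \<eta>)) * indicator G z \<le> ennreal (real (?l z))"
          proof (cases "z \<in> G")
            case True
            hence "L n + 1 \<le> ?l z" unfolding G_def by simp
            moreover have "real n * (b - \<eta>) < real (L n + 1)" unfolding L_def by linarith
            ultimately have "real n * (b - \<eta>) \<le> real (?l z)" by linarith
            thus ?thesis using True by (simp add: ennreal_leI)
          qed simp
        qed
        finally show ?thesis unfolding exp_length_def .
      qed
      have m1: "(b - \<eta>) * (1 - \<epsilon> - 3 * \<eta>) \<le> (b - \<eta>) * measure ?Q G"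
        by (rule mult_left_mono) (use pG \<eta> in auto)
      have m2: "(b - \<eta>) * measure ?Q G = real n * (b - \<eta>) * measure ?Q G / real n"
        using n5 by simp
      have m3: "ereal (real n * (b - \<eta>) * measure ?Q G / real n) \<le> ?rate n"
        by (rule rate_ge[OF expl _ n5]) (use \<eta> in simp)
      have "ereal ((b - \<eta>) * (1 - \<epsilon> - 3 * \<eta>)) < ereal (R + \<eta>)"
        using m1 m2 m3 n2 by (metis ereal_less_eq(3) order.trans order_le_less_trans)
      hence "(b - \<eta>) * (1 - \<epsilon> - 3 * \<eta>) < R + \<eta>" by simp
      thus "f \<eta> \<le> R" unfolding f_def by linarith
    qed
    have lim: "(f \<longlongrightarrow> (b - 0) * (1 - \<epsilon> - 3 * 0) - 0) (at_right 0)"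
      unfolding f_def by (intro tendsto_intros)
    have "(b - 0) * (1 - \<epsilon> - 3 * 0) - 0 \<le> R"
    proof (rule small_limit[OF _ _ lim])
      show "0 < min b ((1 - \<epsilon>) / 3)" using bpos e by simp
    next
      fix \<eta> :: real assume "0 < \<eta>" "\<eta> < min b ((1 - \<epsilon>) / 3)"
      thus "f \<eta> \<le> R" by (rule fle)
    qed
    thus ?thesis by (simp add: mult.commute)
  qed
qed


lemma inj_code:
  assumes A: "finite A" and c: "real (card A) \<le> 2 powr r"
  shows "\<exists>f. (\<forall>x\<in>A. length (f x :: bool list) = nat \<lceil>r\<rceil>) \<and> inj_on f A"
proof -
  let ?k = "nat \<lceil>r\<rceil>"
  have eq: "{xs. set xs \<subseteq> UNIV \<and> length xs = ?k} = {xs::bool list. length xs = ?k}" by simp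
  have "card {xs::bool list. set xs \<subseteq> UNIV \<and> length xs = ?k} = 2 ^ ?k"
    by (subst card_lists_length_eq) (auto simp: card_UNIV_bool)
  hence cB: "card {xs::bool list. length xs = ?k} = 2 ^ ?k" unfolding eq .
  have "finite {xs::bool list. set xs \<subseteq> UNIV \<and> length xs = ?k}"
    by (rule finite_lists_length_eq) auto
  hence fB: "finite {xs::bool list. length xs = ?k}" unfolding eq .
  have "2 powr r \<le> 2 powr (real ?k)" by (intro powr_mono) linarith+
  also have "\<dots> = real (2 ^ ?k)" by (simp add: powr_realpow)
  finally have "real (card A) \<le> real (2 ^ ?k)" using c by linarith
  hence "card A \<le> card {xs::bool list. length xs = ?k}" using cB by (simp only: of_nat_le_iff)
  then obtain f where "f ` A \<subseteq> {xs::bool list. length xs = ?k}" "inj_on f A"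
    using card_le_inj[OF A fB] by blast
  thus ?thesis by (intro exI[of _ f]) auto
qed

definition cw_set :: "nat \<Rightarrow> nat \<Rightarrow> bool list set" where
  "cw_set k1 k2 = {[False]} \<union> {True # False # w | w. length w = k1} \<union> {True # True # w | w. length w = k2}"

lemma cw_set_pf: "prefix_free (cw_set k1 k2)"
  unfolding prefix_free_def cw_set_def
proof (intro ballI notI)
  fix u v assume u: "u \<in> {[False]} \<union> {True # False # w | w. length w = k1} \<union> {True # True # w | w. length w = k2}"
    and v: "v \<in> {[False]} \<union> {True # False # w | w. length w = k1} \<union> {True # True # w | w. length w = k2}"
    and sp: "strict_prefix u v"
  have lt: "length u < length v" using prefix_length_less[OF sp] .
  have pf: "prefix u v" using sp by (simp add: strict_prefix_def)
  from u v lt pf show False by auto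
qed


lemma achieve_n:
  fixes Q :: "('a::countable list \<times> 'b::countable list) pmf"
  assumes e: "0 \<le> \<epsilon>" "\<epsilon> < 1"
  shows "\<exists>(enc :: 'a list \<Rightarrow> 'b list \<Rightarrow> bool list) (dec :: bool list \<Rightarrow> 'b list \<Rightarrow> 'a list). com_code n enc \<and>
     err_prob Q enc dec \<le> max \<epsilon> (measure Q {z. cond_prob Q (fst z) (snd z) < 2 powr (- (real n * \<alpha>))}) \<and>
     exp_length Q enc \<le> ennreal (3 + real (nat \<lceil>real n * \<delta>\<rceil>) + (2 + real (nat \<lceil>real n * \<alpha>\<rceil>)) * (1 - \<epsilon> + 2 powr (- (real n * \<delta>))))"
proof -
  define c1 where "c1 = 2 powr (- (real n * \<delta>))"
  define c2 where "c2 = 2 powr (- (real n * \<alpha>))"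
  define k1 where "k1 = nat \<lceil>real n * \<delta>\<rceil>"
  define k2 where "k2 = nat \<lceil>real n * \<alpha>\<rceil>"
  define T1 where "T1 y = {x. c1 \<le> cond_prob Q x y}" for y
  define T2 where "T2 y = {x. c2 \<le> cond_prob Q x y}" for y
  have c1pos: "0 < c1" and c2pos: "0 < c2" unfolding c1_def c2_def by simp_all
  have "\<exists>f. (\<forall>x\<in>T1 y. length (f x :: bool list) = k1) \<and> inj_on f (T1 y)" for y
  proof -
    have h: "finite (T1 y)" "real (card (T1 y)) \<le> 1 / c1"
      using high_prob_finite[OF c1pos, of Q y] unfolding T1_def by auto
    have "1 / c1 = 2 powr (real n * \<delta>)" unfolding c1_def by (simp add: powr_minus divide_inverse)
    thus ?thesis unfolding k1_def using inj_code[OF h(1)] h(2) by simp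
  qed
  then obtain f1 where f1: "\<And>y. (\<forall>x\<in>T1 y. length (f1 y x :: bool list) = k1) \<and> inj_on (f1 y) (T1 y)"
    by metis
  have "\<exists>f. (\<forall>x\<in>T2 y. length (f x :: bool list) = k2) \<and> inj_on f (T2 y)" for y
  proof -
    have h: "finite (T2 y)" "real (card (T2 y)) \<le> 1 / c2"
      using high_prob_finite[OF c2pos, of Q y] unfolding T2_def by auto
    have "1 / c2 = 2 powr (real n * \<alpha>)" unfolding c2_def by (simp add: powr_minus divide_inverse)
    thus ?thesis unfolding k2_def using inj_code[OF h(1)] h(2) by simp
  qed
  then obtain f2 where f2: "\<And>y. (\<forall>x\<in>T2 y. length (f2 y x :: bool list) = k2) \<and> inj_on (f2 y) (T2 y)"
    by metis
  define A2 where "A2 = {z. c2 \<le> cond_prob Q (fst z) (snd z) \<and> cond_prob Q (fst z) (snd z) < c1}"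
  define E1 where "E1 = {z. c1 \<le> cond_prob Q (fst z) (snd z)}"
  define t where "t = 1 - \<epsilon> - measure Q E1"
  have atoms: "pmf Q z \<le> c1" if "z \<in> A2" for z
  proof -
    obtain x y where z: "z = (x, y)" by (cases z)
    have "pmf Q z = cond_prob Q x y * pmf (map_pmf snd Q) y" using z pmf_eq_cond by simp
    also have "\<dots> \<le> cond_prob Q x y * 1" by (intro mult_left_mono pmf_le_1 cond_prob_nonneg)
    also have "\<dots> \<le> c1" using that z unfolding A2_def by simp
    finally show ?thesis .
  qed
  obtain S where S: "S \<subseteq> A2" "min (measure Q A2) t \<le> measure Q S" "measure Q S \<le> max t 0 + c1"
    using select_subset[of A2 Q c1 t, OF atoms] c1pos by auto
  define enc :: "'a list \<Rightarrow> 'b list \<Rightarrow> bool list" where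
    "enc x y = (if c1 \<le> cond_prob Q x y then True # False # f1 y x
                else if (x, y) \<in> S then True # True # f2 y x else [False])" for x y
  define good where "good x y \<longleftrightarrow> c1 \<le> cond_prob Q x y \<or> (x, y) \<in> S" for x y
  define dec :: "bool list \<Rightarrow> 'b list \<Rightarrow> 'a list" where "dec w y = (SOME x. good x y \<and> enc x y = w)" for w y
  have uniq: "x' = x" if g: "good x y" "good x' y" and eq: "enc x' y = enc x y" for x x' y
  proof (cases "c1 \<le> cond_prob Q x y")
    case True
    show ?thesis
    proof (cases "c1 \<le> cond_prob Q x' y")
      case True2: True
      hence "f1 y x' = f1 y x" using eq True unfolding enc_def by simp
      moreover have "x \<in> T1 y" "x' \<in> T1 y" using True True2 unfolding T1_def by auto
      ultimately show ?thesis using f1[of y] by (meson inj_onD)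
    next
      case False
      then show ?thesis using eq True g unfolding enc_def good_def by auto
    qed
  next
    case False
    hence xS: "(x, y) \<in> S" using g unfolding good_def by auto
    show ?thesis
    proof (cases "c1 \<le> cond_prob Q x' y")
      case True
      then show ?thesis using eq False xS unfolding enc_def by auto
    next
      case False2: False
      hence x'S: "(x', y) \<in> S" using g unfolding good_def by auto
      hence "f2 y x' = f2 y x" using eq False False2 xS unfolding enc_def by simp
      moreover have "x \<in> T2 y" "x' \<in> T2 y" using xS x'S S(1) unfolding T2_def A2_def by auto
      ultimately show ?thesis using f2[of y] by (meson inj_onD)
    qed
  qed
  have dec_ok: "dec (enc x y) y = x" if "good x y" for x y
    unfolding dec_def by (rule someI2[of _ x]) (use that uniq in auto)
  have cw: "enc x y \<in> cw_set k1 k2" for x y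
  proof -
    consider "c1 \<le> cond_prob Q x y" | "\<not> c1 \<le> cond_prob Q x y" "(x, y) \<in> S" | "\<not> c1 \<le> cond_prob Q x y" "(x, y) \<notin> S"
      by blast
    thus ?thesis
    proof cases
      case 1
      hence "x \<in> T1 y" unfolding T1_def by simp
      hence "length (f1 y x) = k1" using f1[of y] by blast
      thus ?thesis using 1 unfolding enc_def cw_set_def by auto
    next
      case 2
      hence "x \<in> T2 y" using S(1) unfolding T2_def A2_def by auto
      hence "length (f2 y x) = k2" using f2[of y] by blast
      thus ?thesis using 2 unfolding enc_def cw_set_def by auto
    next
      case 3
      thus ?thesis unfolding enc_def cw_set_def by auto
    qed
  qed
  have code: "com_code n enc"
    unfolding com_code_def
  proof (intro allI impI)
    fix y :: "'b list"
    have sub: "{enc x y |x. length x = n} \<subseteq> cw_set k1 k2" using cw by auto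
    show "prefix_free {enc x y |x. length x = n}"
      using cw_set_pf[of k1 k2] sub unfolding prefix_free_def by blast
  qed
  have disj: "E1 \<inter> S = {}" using S(1) unfolding E1_def A2_def by auto
  have errb: "err_prob Q enc dec \<le> 1 - measure Q E1 - measure Q S"
  proof -
    have "err_prob Q enc dec \<le> measure Q (- (E1 \<union> S))"
      unfolding err_prob_def
    proof (intro measure_pmf.finite_measure_mono)
      show "{xy. dec (enc (fst xy) (snd xy)) (snd xy) \<noteq> fst xy} \<subseteq> - (E1 \<union> S)"
      proof
        fix z assume z: "z \<in> {xy. dec (enc (fst xy) (snd xy)) (snd xy) \<noteq> fst xy}"
        show "z \<in> - (E1 \<union> S)"
        proof
          assume "z \<in> E1 \<union> S"
          hence "good (fst z) (snd z)" unfolding good_def E1_def by auto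
          thus False using dec_ok z by auto
        qed
      qed
    qed simp
    also have "\<dots> = 1 - measure Q (E1 \<union> S)"
      by (simp add: measure_pmf.prob_compl[symmetric] Compl_eq_Diff_UNIV)
    also have "measure Q (E1 \<union> S) = measure Q E1 + measure Q S"
      using disj by (intro measure_pmf.finite_measure_Union) auto
    finally show ?thesis by simp
  qed
  have errb2: "1 - measure Q E1 - measure Q S \<le> max \<epsilon> (measure Q {z. cond_prob Q (fst z) (snd z) < c2})"
  proof -
    have "measure Q {z. c2 \<le> cond_prob Q (fst z) (snd z)} \<le> measure Q (E1 \<union> A2)"
      by (intro measure_pmf.finite_measure_mono) (auto simp: E1_def A2_def)
    also have "\<dots> \<le> measure Q E1 + measure Q A2" by (rule measure_subadditive) auto
    finally have a: "measure Q {z. c2 \<le> cond_prob Q (fst z) (snd z)} \<le> measure Q E1 + measure Q A2" .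
    have "measure Q {z. cond_prob Q (fst z) (snd z) < c2} = 1 - measure Q {z. c2 \<le> cond_prob Q (fst z) (snd z)}"
    proof -
      have eqs: "{z. cond_prob Q (fst z) (snd z) < c2} = space (measure_pmf Q) - {z. c2 \<le> cond_prob Q (fst z) (snd z)}" by auto
      show ?thesis unfolding eqs by (rule measure_pmf.prob_compl) simp
    qed
    with a S(2) show ?thesis unfolding t_def by (auto simp: min_def max_def split: if_splits)
  qed
  have explen: "exp_length Q enc \<le> ennreal (3 + real k1 + (2 + real k2) * (1 - \<epsilon> + c1))"
  proof -
    let ?a = "3 + real k1" and ?b = "2 + real k2"
    have "exp_length Q enc \<le> (\<integral>\<^sup>+z. ennreal ?a + ennreal ?b * indicator S z \<partial>Q)"
      unfolding exp_length_def
    proof (rule nn_integral_mono)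
      fix z :: "'a list \<times> 'b list"
      obtain x y where z: "z = (x, y)" by (cases z)
      show "ennreal (real (length (enc (fst z) (snd z)))) \<le> ennreal ?a + ennreal ?b * indicator S z"
      proof (cases "z \<in> S")
        case True
        hence "\<not> c1 \<le> cond_prob Q x y" "x \<in> T2 y" using S(1) z unfolding A2_def T2_def by auto
        hence "length (enc x y) = 2 + k2" using True z f2[of y] unfolding enc_def by auto
        hence "real (length (enc (fst z) (snd z))) \<le> ?a + ?b" using z by simp
        hence le: "ennreal (real (length (enc (fst z) (snd z)))) \<le> ennreal (?a + ?b)" by (rule ennreal_leI)
        have eqn: "ennreal ?a + ennreal ?b * indicator S z = ennreal (?a + ?b)"
          using True by (simp add: ennreal_plus)
        show ?thesis unfolding eqn by (rule le)
      next
        case False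
        have "length (enc x y) \<le> 2 + k1"
        proof (cases "c1 \<le> cond_prob Q x y")
          case True
          hence "x \<in> T1 y" unfolding T1_def by simp
          thus ?thesis using True f1[of y] unfolding enc_def by auto
        qed (use False z in \<open>auto simp: enc_def\<close>)
        hence "real (length (enc (fst z) (snd z))) \<le> ?a" using z by simp
        hence "ennreal (real (length (enc (fst z) (snd z)))) \<le> ennreal ?a" by (rule ennreal_leI)
        thus ?thesis using False by simp
      qed
    qed
    also have "\<dots> = (\<integral>\<^sup>+z. ennreal ?a \<partial>Q) + (\<integral>\<^sup>+z. ennreal ?b * indicator S z \<partial>Q)"
      by (rule nn_integral_add) auto
    also have "\<dots> = ennreal ?a + ennreal ?b * emeasure Q S"
      by (simp add: nn_integral_cmult_indicator measure_pmf.emeasure_space_1)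
    also have "\<dots> = ennreal (?a + ?b * measure Q S)"
      by (simp add: measure_pmf.emeasure_eq_measure ennreal_mult ennreal_plus)
    also have "\<dots> \<le> ennreal (?a + ?b * (1 - \<epsilon> + c1))"
    proof (rule ennreal_leI)
      have "t \<le> 1 - \<epsilon>" unfolding t_def using measure_nonneg[of Q E1] by linarith
      hence "max t 0 \<le> 1 - \<epsilon>" using e by simp
      hence "measure Q S \<le> 1 - \<epsilon> + c1" using S(3) by linarith
      thus "?a + ?b * measure Q S \<le> ?a + ?b * (1 - \<epsilon> + c1)" by (simp add: mult_left_mono)
    qed
    finally show ?thesis .
  qed
  show ?thesis
    using code errb errb2 explen unfolding c1_def c2_def k1_def k2_def
    by (intro exI[of _ enc] exI[of _ dec]) auto
qed




lemma limsup_le_eps: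
  fixes a :: "nat \<Rightarrow> real"
  assumes "\<And>\<eta>. 0 < \<eta> \<Longrightarrow> eventually (\<lambda>n. a n \<le> c + \<eta>) sequentially"
  shows "limsup (\<lambda>n. ereal (a n)) \<le> ereal c"
proof (rule ereal_le_epsilon2)
  fix \<eta> :: real assume "0 < \<eta>"
  have "limsup (\<lambda>n. ereal (a n)) \<le> ereal (c + \<eta>)"
    by (rule Limsup_bounded) (use assms[OF \<open>0 < \<eta>\<close>] in \<open>auto elim: eventually_mono\<close>)
  thus "limsup (\<lambda>n. ereal (a n)) \<le> ereal c + ereal \<eta>" by simp
qed

lemma choice2: "\<forall>n. \<exists>a b. Phi n a b \<Longrightarrow> \<exists>f g. \<forall>n. Phi n (f n) (g n)"
  by metis

lemma achieve_rate:
  fixes P :: "nat \<Rightarrow> ('a::countable list \<times> 'b::countable list) pmf"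
  assumes e: "0 \<le> \<epsilon>" "\<epsilon> < 1" and d: "0 < \<delta>" and a0: "0 \<le> \<alpha>"
    and a: "((\<lambda>n. measure_pmf.prob (P n) {w. ent_density P n w > \<alpha>}) \<longlongrightarrow> 0) sequentially"
  shows "com_achievable P \<epsilon> (2 * \<delta> + (1 - \<epsilon>) * \<alpha>)"
proof -
  define g where "g n = (4 + real n * \<delta> + (3 + real n * \<alpha>) * (1 - \<epsilon> + 2 powr (- (real n * \<delta>)))) / real n" for n
  define Phi where "Phi n (enc :: 'a list \<Rightarrow> 'b list \<Rightarrow> bool list) (dec :: bool list \<Rightarrow> 'b list \<Rightarrow> 'a list) \<longleftrightarrow> com_code n enc \<and>
     err_prob (P n) enc dec \<le> max \<epsilon> (measure (P n) {z. cond_prob (P n) (fst z) (snd z) < 2 powr (- (real n * \<alpha>))}) \<and>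
     exp_length (P n) enc \<le> ennreal (3 + real (nat \<lceil>real n * \<delta>\<rceil>) + (2 + real (nat \<lceil>real n * \<alpha>\<rceil>)) * (1 - \<epsilon> + 2 powr (- (real n * \<delta>))))" for n enc dec
  have "\<forall>n. \<exists>enc dec. Phi n enc dec" unfolding Phi_def by (intro allI) (rule achieve_n[OF e])
  then obtain enc dec where EP: "\<And>n. Phi n (enc n) (dec n)" using choice2 by blast
  have E: "com_code n (enc n) \<and>
     err_prob (P n) (enc n) (dec n) \<le> max \<epsilon> (measure (P n) {z. cond_prob (P n) (fst z) (snd z) < 2 powr (- (real n * \<alpha>))}) \<and>
     exp_length (P n) (enc n) \<le> ennreal (3 + real (nat \<lceil>real n * \<delta>\<rceil>) + (2 + real (nat \<lceil>real n * \<alpha>\<rceil>)) * (1 - \<epsilon> + 2 powr (- (real n * \<delta>))))" for n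
    using EP[of n] unfolding Phi_def .
  have errn: "err_prob (P n) (enc n) (dec n) \<le> max \<epsilon> (measure_pmf.prob (P n) {w. ent_density P n w > \<alpha>})"
    if n: "0 < n" for n
  proof -
    have "measure (P n) {z. cond_prob (P n) (fst z) (snd z) < 2 powr (- (real n * \<alpha>))}
        = measure (P n) ({z. cond_prob (P n) (fst z) (snd z) < 2 powr (- (real n * \<alpha>))} \<inter> set_pmf (P n))"
      by (simp add: measure_Int_set_pmf)
    also have "\<dots> \<le> measure_pmf.prob (P n) {w. ent_density P n w > \<alpha>}"
      by (intro measure_pmf.finite_measure_mono) (auto simp: ent_density_greater_iff[OF _ n])
    finally show ?thesis using E[of n] by (auto simp: max_def split: if_splits)
  qed
  have "limsup (\<lambda>n. ereal (err_prob (P n) (enc n) (dec n))) \<le> ereal \<epsilon>"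
  proof (rule limsup_le_eps)
    fix \<eta> :: real assume \<eta>: "0 < \<eta>"
    have "eventually (\<lambda>n. measure_pmf.prob (P n) {w. ent_density P n w > \<alpha>} < \<eta>) sequentially"
      by (rule order_tendstoD(2)[OF a \<eta>])
    thus "eventually (\<lambda>n. err_prob (P n) (enc n) (dec n) \<le> \<epsilon> + \<eta>) sequentially"
      using eventually_gt_at_top[of 0]
    proof (eventually_elim)
      case (elim n)
      thus ?case using errn[of n] \<eta> e by (auto simp: max_def split: if_splits)
    qed
  qed
  moreover have "limsup (\<lambda>n. enn2ereal (exp_length (P n) (enc n)) / ereal (real n)) \<le> ereal (2 * \<delta> + (1 - \<epsilon>) * \<alpha>)"
  proof (rule Limsup_bounded)
    have lim: "g \<longlonglongrightarrow> \<delta> + \<alpha> * (1 - \<epsilon>)"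
      unfolding g_def using d by real_asymp
    have "eventually (\<lambda>n. g n < \<delta> + \<alpha> * (1 - \<epsilon>) + \<delta>) sequentially"
      by (rule order_tendstoD(2)[OF lim]) (use d in simp)
    thus "eventually (\<lambda>n. enn2ereal (exp_length (P n) (enc n)) / ereal (real n) \<le> ereal (2 * \<delta> + (1 - \<epsilon>) * \<alpha>)) sequentially"
      using eventually_gt_at_top[of 0]
    proof (eventually_elim)
      case (elim n)
      let ?k1 = "real (nat \<lceil>real n * \<delta>\<rceil>)" and ?k2 = "real (nat \<lceil>real n * \<alpha>\<rceil>)"
      have "0 \<le> real n * \<delta>" "0 \<le> real n * \<alpha>" using d a0 by simp_all
      hence k1: "?k1 \<le> real n * \<delta> + 1" and k2: "?k2 \<le> real n * \<alpha> + 1" by linarith+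
      have p: "0 \<le> 1 - \<epsilon> + 2 powr (- (real n * \<delta>))" using e by (smt (verit) powr_ge_zero)
      have "3 + ?k1 + (2 + ?k2) * (1 - \<epsilon> + 2 powr (- (real n * \<delta>)))
          \<le> 4 + real n * \<delta> + (3 + real n * \<alpha>) * (1 - \<epsilon> + 2 powr (- (real n * \<delta>)))"
        using k1 k2 p by (smt (verit) mult_right_mono)
      hence "exp_length (P n) (enc n) \<le> ennreal (4 + real n * \<delta> + (3 + real n * \<alpha>) * (1 - \<epsilon> + 2 powr (- (real n * \<delta>))))"
        using E[of n] by (meson ennreal_leI order_trans)
      hence "enn2ereal (exp_length (P n) (enc n)) / ereal (real n) \<le> ereal (g n)"
        unfolding g_def using elim p d a0 by (intro rate_le) (auto intro!: add_nonneg_nonneg mult_nonneg_nonneg)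
      also have "\<dots> \<le> ereal (2 * \<delta> + (1 - \<epsilon>) * \<alpha>)" using elim by (simp add: algebra_simps)
      finally show ?case .
    qed
  qed
  moreover have "\<forall>n. com_code n (enc n)" using E by blast
  ultimately show ?thesis unfolding com_achievable_def by blast
qed


lemma upper_set_nonneg:
  assumes "((\<lambda>n. measure_pmf.prob (P n) {w. ent_density P n w > \<alpha>}) \<longlongrightarrow> 0) sequentially"
  shows "0 \<le> \<alpha>"
proof (rule ccontr)
  assume "\<not> 0 \<le> \<alpha>"
  hence "{w. ent_density P n w > \<alpha>} = UNIV" for n
  proof -
    have "\<alpha> < ent_density P n w" for w using ent_density_nonneg[of P n w] \<open>\<not> 0 \<le> \<alpha>\<close> by linarith
    thus ?thesis by auto
  qed
  hence "(\<lambda>n. measure_pmf.prob (P n) {w. ent_density P n w > \<alpha>}) = (\<lambda>n. 1)" by simp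
  with assms have "((\<lambda>n. 1::real) \<longlongrightarrow> 0) sequentially" by simp
  thus False using LIMSEQ_unique[OF _ tendsto_const[of 1]] by fastforce
qed

lemma ereal_mult_le_aux:
  assumes "x \<le> ereal (R / c)" "0 < c"
  shows "ereal c * x \<le> ereal R"
proof (cases x)
  case (real r)
  hence "r * c \<le> R" using assms by (simp add: le_divide_eq)
  thus ?thesis using real by (simp add: mult.commute)
next
  case PInf then show ?thesis using assms by simp
next
  case MInf then show ?thesis using assms by simp
qed

theorem theorem6:
  fixes P :: "nat \<Rightarrow> ('a::countable list \<times> 'b::countable list) pmf"
    and \<epsilon> :: real
  assumes "general_source P"
    and "0 \<le> \<epsilon>" and "\<epsilon> < 1"
  shows "ereal (1 - \<epsilon>) * lower_cond_entropy P \<le> R_com P \<epsilon>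
         \<and> R_com P \<epsilon> \<le> ereal (1 - \<epsilon>) * upper_cond_entropy P"
proof
  have e: "0 \<le> \<epsilon>" "\<epsilon> < 1" using assms by auto
  show "ereal (1 - \<epsilon>) * lower_cond_entropy P \<le> R_com P \<epsilon>"
    unfolding R_com_def
  proof (rule Inf_greatest)
    fix r assume "r \<in> ereal ` {R. com_achievable P \<epsilon> R}"
    then obtain R where r: "r = ereal R" and ach: "com_achievable P \<epsilon> R" by blast
    have "lower_cond_entropy P \<le> ereal (R / (1 - \<epsilon>))"
      unfolding lower_cond_entropy_def p_liminf_def
    proof (rule Sup_least)
      fix x assume "x \<in> ereal ` {\<beta>. ((\<lambda>n. measure_pmf.prob (P n) {w. ent_density P n w < \<beta>}) \<longlongrightarrow> 0) sequentially}"
      then obtain b where x: "x = ereal b" and b: "((\<lambda>n. measure_pmf.prob (P n) {w. ent_density P n w < b}) \<longlongrightarrow> 0) sequentially"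
        by blast
      have "(1 - \<epsilon>) * b \<le> R" by (rule converse_main[OF ach e b])
      hence "b \<le> R / (1 - \<epsilon>)" using e by (simp add: le_divide_eq mult.commute)
      thus "x \<le> ereal (R / (1 - \<epsilon>))" using x by simp
    qed
    hence "ereal (1 - \<epsilon>) * lower_cond_entropy P \<le> ereal R"
      by (rule ereal_mult_le_aux) (use e in simp)
    thus "ereal (1 - \<epsilon>) * lower_cond_entropy P \<le> r" using r by simp
  qed
next
  have e: "0 \<le> \<epsilon>" "\<epsilon> < 1" using assms by auto
  define A where "A = {\<alpha>. ((\<lambda>n. measure_pmf.prob (P n) {w. ent_density P n w > \<alpha>}) \<longlongrightarrow> 0) sequentially}"
  have H: "upper_cond_entropy P = Inf (ereal ` A)"
    unfolding upper_cond_entropy_def p_limsup_def A_def ..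
  have A0: "0 \<le> a" if "a \<in> A" for a using that upper_set_nonneg unfolding A_def by blast
  have bnd: "R_com P \<epsilon> \<le> ereal ((1 - \<epsilon>) * a)" if a: "a \<in> A" for a
  proof (rule ereal_le_epsilon2)
    fix d :: real assume d: "0 < d"
    have "com_achievable P \<epsilon> (2 * (d / 2) + (1 - \<epsilon>) * a)"
      using a d A0[OF a] e unfolding A_def by (intro achieve_rate) auto
    hence "R_com P \<epsilon> \<le> ereal (2 * (d / 2) + (1 - \<epsilon>) * a)"
      unfolding R_com_def by (intro Inf_lower) auto
    thus "R_com P \<epsilon> \<le> ereal ((1 - \<epsilon>) * a) + ereal d" by (simp add: algebra_simps)
  qed
  show "R_com P \<epsilon> \<le> ereal (1 - \<epsilon>) * upper_cond_entropy P"
  proof (cases "Inf (ereal ` A)")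
    case (real h)
    show ?thesis unfolding H real
    proof (rule ereal_le_epsilon2)
      fix d :: real assume d: "0 < d"
      have "Inf (ereal ` A) < ereal (h + d / (1 - \<epsilon>))" using real d e by simp
      then obtain x where "x \<in> ereal ` A" "x < ereal (h + d / (1 - \<epsilon>))" by (subst (asm) Inf_less_iff) blast
      then obtain a where a: "a \<in> A" "a < h + d / (1 - \<epsilon>)" by auto
      have "(1 - \<epsilon>) * a \<le> (1 - \<epsilon>) * (h + d / (1 - \<epsilon>))" using a e by (intro mult_left_mono) auto
      also have "\<dots> = (1 - \<epsilon>) * h + d" using e by (simp add: field_simps)
      finally have "R_com P \<epsilon> \<le> ereal ((1 - \<epsilon>) * h + d)" using bnd[OF a(1)] by (meson ereal_less_eq(3) order_trans)
      thus "R_com P \<epsilon> \<le> ereal (1 - \<epsilon>) * ereal h + ereal d" by simp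
    qed
  next
    case PInf
    thus ?thesis using e unfolding H by simp
  next
    case MInf
    have "(0::ereal) \<le> Inf (ereal ` A)" by (rule Inf_greatest) (auto dest: A0)
    thus ?thesis using MInf by simp
  qed
qed

end
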